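(* Let $G=\langle X\rangle$ be a $\delta$-hyperbolic group, $\delta$ a positive integer, and let $V$ be a cyclically minimal word over $X\cup X^{-1}$ with $\|V\|\ge\alpha$, where $\alpha=180\delta$. Then for each $k\in\mathbb Z$, $V^k$ is a $(4,2520\delta)$-quasi-geodesic word in $\Gamma(G,X)$.
   Context: $X$ is finite; $G$ is $\delta$-hyperbolic if every geodesic triangle in the Cayley graph $\Gamma(G,X)$ is $\delta$-slim (each side lies in the $\delta$-neighborhood of the union of the other two). $\|W\|$ denotes the length of a word $W$. A word $V$ is cyclically minimal if $\|V\|$ is minimal among the lengths of all words representing elements conjugate in $G$ to the element represented by $V$. A word $W$ is $(\lambda,c)$-quasi-geodesic if every path $p$ in $\Gamma(G,X)$ labeled by $W$, parametrized by length, satisfies $|s-t|\le\lambda\, d(p(s),p(t))+c$ for all $s,t$. *)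

theory Defs
  imports Complex_Main "HOL-Algebra.Generated_Groups"
begin

text \<open>Words over X \<union> X^-1: a letter is a pair (x, b) with x \<in> X; (x, True) stands
  for x and (x, False) for its formal inverse.\<close>

definition is_word :: "'g set \<Rightarrow> ('g \<times> bool) list \<Rightarrow> bool" where
  "is_word X w \<longleftrightarrow> (\<forall>l \<in> set w. fst l \<in> X)"

definition letter_val :: "('g, 'b) monoid_scheme \<Rightarrow> 'g \<times> bool \<Rightarrow> 'g" where
  "letter_val G l = (if snd l then fst l else inv\<^bsub>G\<^esub> (fst l))"

definition word_eval :: "('g, 'b) monoid_scheme \<Rightarrow> ('g \<times> bool) list \<Rightarrow> 'g" where
  "word_eval G w = foldr (\<lambda>l acc. letter_val G l \<otimes>\<^bsub>G\<^esub> acc) w \<one>\<^bsub>G\<^esub>"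

definition word_inv :: "('g \<times> bool) list \<Rightarrow> ('g \<times> bool) list" where
  "word_inv w = rev (map (\<lambda>(x, b). (x, \<not> b)) w)"

definition word_pow :: "('g \<times> bool) list \<Rightarrow> int \<Rightarrow> ('g \<times> bool) list" where
  "word_pow V k = (if 0 \<le> k then concat (replicate (nat k) V)
                   else concat (replicate (nat (- k)) (word_inv V)))"

definition word_dist :: "('g, 'b) monoid_scheme \<Rightarrow> 'g set \<Rightarrow> 'g \<Rightarrow> 'g \<Rightarrow> nat" where
  "word_dist G X u v = (LEAST n. \<exists>w. is_word X w \<and> length w = n \<and>
                          word_eval G w = inv\<^bsub>G\<^esub> u \<otimes>\<^bsub>G\<^esub> v)"

definition cyclically_minimal :: "('g, 'b) monoid_scheme \<Rightarrow> 'g set \<Rightarrow> ('g \<times> bool) list \<Rightarrow> bool" where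
  "cyclically_minimal G X V \<longleftrightarrow> is_word X V \<and>
     (\<forall>W h. is_word X W \<longrightarrow> h \<in> carrier G \<longrightarrow>
        word_eval G W = inv\<^bsub>G\<^esub> h \<otimes>\<^bsub>G\<^esub> word_eval G V \<otimes>\<^bsub>G\<^esub> h \<longrightarrow> length V \<le> length W)"

text \<open>Points of the geometric realisation of the Cayley graph \<Gamma>(G,X), each edge
  isometric to [0,1]. The edge labelled x \<in> X goes from g to g x; the point
  Edge g x s lies at distance s from g along it.\<close>
datatype 'g cpoint = Vert 'g | Edge 'g 'g real

fun valid_point :: "('g, 'b) monoid_scheme \<Rightarrow> 'g set \<Rightarrow> 'g cpoint \<Rightarrow> bool" where
  "valid_point G X (Vert g) = (g \<in> carrier G)"
| "valid_point G X (Edge g x s) = (g \<in> carrier G \<and> x \<in> X \<and> 0 \<le> s \<and> s \<le> 1)"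

fun ends :: "('g, 'b) monoid_scheme \<Rightarrow> 'g cpoint \<Rightarrow> ('g \<times> real) list" where
  "ends G (Vert g) = [(g, 0)]"
| "ends G (Edge g x s) = [(g, s), (g \<otimes>\<^bsub>G\<^esub> x, 1 - s)]"

fun same_edge_dist :: "'g cpoint \<Rightarrow> 'g cpoint \<Rightarrow> real list" where
  "same_edge_dist (Edge g x s) (Edge h y t) = (if g = h \<and> x = y then [\<bar>s - t\<bar>] else [])"
| "same_edge_dist _ _ = []"

definition cdist :: "('g, 'b) monoid_scheme \<Rightarrow> 'g set \<Rightarrow> 'g cpoint \<Rightarrow> 'g cpoint \<Rightarrow> real" where
  "cdist G X p q = Min (set ([a + real (word_dist G X u v) + b. (u, a) \<leftarrow> ends G p, (v, b) \<leftarrow> ends G q]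
                             @ same_edge_dist p q))"

definition geodesic :: "('g, 'b) monoid_scheme \<Rightarrow> 'g set \<Rightarrow> (real \<Rightarrow> 'g cpoint) \<Rightarrow> real \<Rightarrow> bool" where
  "geodesic G X \<gamma> L \<longleftrightarrow> 0 \<le> L \<and> (\<forall>s \<in> {0..L}. valid_point G X (\<gamma> s)) \<and>
     (\<forall>s \<in> {0..L}. \<forall>t \<in> {0..L}. cdist G X (\<gamma> s) (\<gamma> t) = \<bar>s - t\<bar>)"

definition in_nbhd :: "('g, 'b) monoid_scheme \<Rightarrow> 'g set \<Rightarrow> real \<Rightarrow> 'g cpoint \<Rightarrow> (real \<Rightarrow> 'g cpoint) \<Rightarrow> real \<Rightarrow> bool" where
  "in_nbhd G X d p \<gamma> L \<longleftrightarrow> (\<exists>t \<in> {0..L}. cdist G X p (\<gamma> t) \<le> d)"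

definition side_slim :: "('g, 'b) monoid_scheme \<Rightarrow> 'g set \<Rightarrow> real \<Rightarrow> (real \<Rightarrow> 'g cpoint) \<Rightarrow> real
     \<Rightarrow> (real \<Rightarrow> 'g cpoint) \<Rightarrow> real \<Rightarrow> (real \<Rightarrow> 'g cpoint) \<Rightarrow> real \<Rightarrow> bool" where
  "side_slim G X d \<alpha> A \<beta> B \<gamma> C \<longleftrightarrow>
     (\<forall>s \<in> {0..A}. in_nbhd G X d (\<alpha> s) \<beta> B \<or> in_nbhd G X d (\<alpha> s) \<gamma> C)"

definition hyperbolic :: "('g, 'b) monoid_scheme \<Rightarrow> 'g set \<Rightarrow> real \<Rightarrow> bool" where
  "hyperbolic G X \<delta> \<longleftrightarrow>
     (\<forall>\<alpha> A \<beta> B \<gamma> C. geodesic G X \<alpha> A \<and> geodesic G X \<beta> B \<and> geodesic G X \<gamma> C \<and>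
        cdist G X (\<alpha> A) (\<beta> 0) = 0 \<and> cdist G X (\<beta> B) (\<gamma> 0) = 0 \<and> cdist G X (\<gamma> C) (\<alpha> 0) = 0
      \<longrightarrow> side_slim G X \<delta> \<alpha> A \<beta> B \<gamma> C \<and> side_slim G X \<delta> \<beta> B \<gamma> C \<alpha> A
          \<and> side_slim G X \<delta> \<gamma> C \<alpha> A \<beta> B)"

definition word_path :: "('g, 'b) monoid_scheme \<Rightarrow> 'g \<Rightarrow> ('g \<times> bool) list \<Rightarrow> real \<Rightarrow> 'g cpoint" where
  "word_path G g W s =
     (if s < real (length W) then
        (let i = nat \<lfloor>s\<rfloor>; u = g \<otimes>\<^bsub>G\<^esub> word_eval G (take i W); l = W ! i in
          if snd l then Edge u (fst l) (s - real i)
          else Edge (u \<otimes>\<^bsub>G\<^esub> inv\<^bsub>G\<^esub> (fst l)) (fst l) (1 - (s - real i)))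
      else Vert (g \<otimes>\<^bsub>G\<^esub> word_eval G W))"

definition quasi_geodesic_word :: "('g, 'b) monoid_scheme \<Rightarrow> 'g set \<Rightarrow> real \<Rightarrow> real \<Rightarrow> ('g \<times> bool) list \<Rightarrow> bool" where
  "quasi_geodesic_word G X lam c W \<longleftrightarrow>
     (\<forall>g \<in> carrier G. \<forall>s \<in> {0..real (length W)}. \<forall>t \<in> {0..real (length W)}.
        \<bar>s - t\<bar> \<le> lam * cdist G X (word_path G g W s) (word_path G g W t) + c)"

end

theory Submission
  imports Defs
begin



lemma arith_final: "44 * (A::real) \<le> 45 * e + 90 * D \<Longrightarrow> (B::real) \<le> A + 2 \<Longrightarrow> 1 \<le> D \<Longrightarrow> 0 \<le> e \<Longrightarrow> B \<le> 4 * e + 2520 * D"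
  by linarith

locale cay = group G for G (structure) +
  fixes X :: "'a set"
  assumes XG: "X \<subseteq> carrier G" and gen: "generate G X = carrier G"
begin

abbreviation d where "d u v \<equiv> word_dist G X u v"

lemma letter_val_carrier: "fst l \<in> X \<Longrightarrow> letter_val G l \<in> carrier G"
  using XG by (auto simp: letter_val_def)

lemma eval_Nil[simp]: "word_eval G [] = \<one>" by (simp add: word_eval_def)
lemma eval_Cons[simp]: "word_eval G (l # w) = letter_val G l \<otimes> word_eval G w"
  by (simp add: word_eval_def)

lemma is_word_simps[simp]: "is_word X [] " "is_word X (l # w) \<longleftrightarrow> fst l \<in> X \<and> is_word X w"
  "is_word X (u @ w) \<longleftrightarrow> is_word X u \<and> is_word X w"
  by (auto simp: is_word_def)

lemma eval_carrier: "is_word X w \<Longrightarrow> word_eval G w \<in> carrier G"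
  by (induction w) (auto simp: letter_val_carrier)

lemma eval_append: "is_word X u \<Longrightarrow> is_word X w \<Longrightarrow>
   word_eval G (u @ w) = word_eval G u \<otimes> word_eval G w"
  by (induction u) (auto simp: letter_val_carrier eval_carrier m_assoc)

lemma is_word_take: "is_word X w \<Longrightarrow> is_word X (take i w)"
  and is_word_drop: "is_word X w \<Longrightarrow> is_word X (drop i w)"
  and is_word_rotate: "is_word X w \<Longrightarrow> is_word X (rotate i w)"
  by (auto simp: is_word_def dest: in_set_takeD in_set_dropD)

lemma is_word_inv: "is_word X w \<Longrightarrow> is_word X (word_inv w)"
  by (auto simp: is_word_def word_inv_def)

lemma letter_inv: "fst l \<in> X \<Longrightarrow> letter_val G ((\<lambda>(x, b). (x, \<not> b)) l) = inv (letter_val G l)"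
  using XG by (cases l) (auto simp: letter_val_def)

lemma eval_inv: "is_word X w \<Longrightarrow> word_eval G (word_inv w) = inv (word_eval G w)"
proof (induction w)
  case Nil then show ?case by (simp add: word_inv_def)
next
  case (Cons l w)
  have "word_inv (l # w) = word_inv w @ [(\<lambda>(x, b). (x, \<not> b)) l]"
    by (simp add: word_inv_def)
  moreover have "is_word X [(\<lambda>(x, b). (x, \<not> b)) l]" using Cons.prems
    by (cases l) (auto simp: is_word_def)
  ultimately show ?case using Cons
    by (simp add: eval_append is_word_inv letter_inv inv_mult_group letter_val_carrier eval_carrier)
qed

lemma length_inv[simp]: "length (word_inv w) = length w" by (simp add: word_inv_def)

lemma eval_take_Suc: "is_word X w \<Longrightarrow> i < length w \<Longrightarrow>
  word_eval G (take (Suc i) w) = word_eval G (take i w) \<otimes> letter_val G (w ! i)"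
proof -
  assume a: "is_word X w" "i < length w"
  have "take (Suc i) w = take i w @ [w ! i]" using a(2) by (simp add: take_Suc_conv_app_nth)
  moreover have "fst (w ! i) \<in> X" using a by (auto simp: is_word_def)
  ultimately show ?thesis using a by (simp add: eval_append is_word_take letter_val_carrier)
qed

lemma gen_word: "h \<in> generate G X \<Longrightarrow> \<exists>w. is_word X w \<and> word_eval G w = h"
proof (induction rule: generate.induct)
  case one then show ?case by (intro exI[of _ "[]"]) simp
next
  case (incl h) then show ?case using XG
    by (intro exI[of _ "[(h, True)]"]) (auto simp: letter_val_def)
next
  case (inv h) then show ?case using XG
    by (intro exI[of _ "[(h, False)]"]) (auto simp: letter_val_def)
next
  case (eng h1 h2)
  then obtain w1 w2 where "is_word X w1" "word_eval G w1 = h1" "is_word X w2" "word_eval G w2 = h2" by blast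
  then show ?case by (intro exI[of _ "w1 @ w2"]) (simp add: eval_append)
qed

lemma word_exists: "h \<in> carrier G \<Longrightarrow> \<exists>w. is_word X w \<and> word_eval G w = h"
  using gen_word gen by auto

lemma d_ex: "u \<in> carrier G \<Longrightarrow> v \<in> carrier G \<Longrightarrow>
  \<exists>w. is_word X w \<and> length w = d u v \<and> word_eval G w = inv u \<otimes> v"
  unfolding word_dist_def
  apply (rule LeastI_ex)
  using word_exists[of "inv u \<otimes> v"] by auto

lemma d_le: "is_word X w \<Longrightarrow> word_eval G w = inv u \<otimes> v \<Longrightarrow> d u v \<le> length w"
  unfolding word_dist_def by (rule Least_le) auto

lemma d_le': "u \<in> carrier G \<Longrightarrow> is_word X w \<Longrightarrow> d u (u \<otimes> word_eval G w) \<le> length w"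
  by (rule d_le) (auto simp: eval_carrier m_assoc[symmetric])

lemma d_refl[simp]: "u \<in> carrier G \<Longrightarrow> d u u = 0"
  using d_le[of "[]" u u] by simp

lemma d_sym: assumes "u \<in> carrier G" "v \<in> carrier G" shows "d u v \<le> d v u"
proof -
  obtain w where w: "is_word X w" "length w = d v u" "word_eval G w = inv v \<otimes> u" using d_ex assms by blast
  have "word_eval G (word_inv w) = inv u \<otimes> v" using w assms by (simp add: eval_inv inv_mult_group)
  then show ?thesis using d_le[of "word_inv w" u v] w is_word_inv by simp
qed

lemma d_sym': "u \<in> carrier G \<Longrightarrow> v \<in> carrier G \<Longrightarrow> d u v = d v u"
  using d_sym by (simp add: le_antisym)

lemma d_tri: assumes "u \<in> carrier G" "v \<in> carrier G" "z \<in> carrier G" shows "d u z \<le> d u v + d v z"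
proof -
  obtain w where w: "is_word X w" "length w = d u v" "word_eval G w = inv u \<otimes> v" using d_ex assms by blast
  obtain w' where w': "is_word X w'" "length w' = d v z" "word_eval G w' = inv v \<otimes> z" using d_ex assms by blast
  have "word_eval G (w @ w') = inv u \<otimes> z" using w w' assms
    by (simp add: eval_append m_assoc) (simp add: m_assoc[symmetric])
  then show ?thesis using d_le[of "w @ w'" u z] w w' by simp
qed

lemma d_zero: "u \<in> carrier G \<Longrightarrow> v \<in> carrier G \<Longrightarrow> d u v = 0 \<Longrightarrow> u = v"
proof -
  assume a: "u \<in> carrier G" "v \<in> carrier G" "d u v = 0"
  then have "inv u \<otimes> v = \<one>" using d_ex[of u v] by auto
  then have "inv v = inv u" using a by (intro inv_equality) auto
  then show ?thesis using a by (metis inv_inv)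
qed


lemma fst_nth_X: "is_word X W \<Longrightarrow> i < length W \<Longrightarrow> fst (W ! i) \<in> X"
  by (auto simp: is_word_def)

definition vx where "vx g W i = g \<otimes> word_eval G (take i W)"

lemma vx_carrier: "g \<in> carrier G \<Longrightarrow> is_word X W \<Longrightarrow> vx g W i \<in> carrier G"
  by (simp add: vx_def eval_carrier is_word_take)

lemma vx_0[simp]: "g \<in> carrier G \<Longrightarrow> vx g W 0 = g" by (simp add: vx_def)

lemma vx_N: "vx g W (length W) = g \<otimes> word_eval G W" by (simp add: vx_def)

lemma vx_Suc: "g \<in> carrier G \<Longrightarrow> is_word X W \<Longrightarrow> i < length W \<Longrightarrow>
   vx g W (Suc i) = vx g W i \<otimes> letter_val G (W ! i)"
proof -
  assume a: "g \<in> carrier G" "is_word X W" "i < length W"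
  show ?thesis unfolding vx_def eval_take_Suc[OF a(2,3)]
    by (rule m_assoc[symmetric]) (auto simp: a eval_carrier is_word_take letter_val_carrier fst_nth_X)
qed


lemma vx_Suc_F: "g \<in> carrier G \<Longrightarrow> is_word X W \<Longrightarrow> i < length W \<Longrightarrow> \<not> snd (W ! i) \<Longrightarrow>
   vx g W (Suc i) \<otimes> fst (W ! i) = vx g W i"
proof -
  assume a: "g \<in> carrier G" "is_word X W" "i < length W" "\<not> snd (W ! i)"
  have x: "fst (W ! i) \<in> carrier G" using fst_nth_X[OF a(2,3)] XG by auto
  have "vx g W (Suc i) = vx g W i \<otimes> inv (fst (W ! i))" using vx_Suc[OF a(1-3)] a(4)
    by (simp add: letter_val_def)
  then show ?thesis using x vx_carrier[OF a(1,2)] by (simp add: m_assoc)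
qed

lemma vx_drop: "g \<in> carrier G \<Longrightarrow> is_word X W \<Longrightarrow> i \<le> j \<Longrightarrow>
  vx g W j = vx g W i \<otimes> word_eval G (take (j - i) (drop i W))"
proof -
  assume a: "g \<in> carrier G" "is_word X W" "i \<le> j"
  have "take j W = take i W @ take (j - i) (drop i W)" using a(3)
    by (metis le_add_diff_inverse take_add)
  then show ?thesis using a by (simp add: vx_def eval_append is_word_take is_word_drop m_assoc
      eval_carrier)
qed

lemma d_vx_le: "g \<in> carrier G \<Longrightarrow> is_word X W \<Longrightarrow> i \<le> j \<Longrightarrow> d (vx g W i) (vx g W j) \<le> j - i"
proof -
  assume a: "g \<in> carrier G" "is_word X W" "i \<le> j"
  have "d (vx g W i) (vx g W j) \<le> length (take (j - i) (drop i W))"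
    unfolding vx_drop[OF a] by (rule d_le') (auto simp: vx_carrier a is_word_take is_word_drop)
  then show ?thesis by simp
qed

lemma word_path_lt:
  assumes "0 \<le> s" "s < real (length W)" "i = nat \<lfloor>s\<rfloor>"
  shows "i < length W" "real i \<le> s" "s < real i + 1"
    "snd (W ! i) \<Longrightarrow> word_path G g W s = Edge (vx g W i) (fst (W ! i)) (s - real i)"
    "\<not> snd (W ! i) \<Longrightarrow> g \<in> carrier G \<Longrightarrow> is_word X W \<Longrightarrow>
       word_path G g W s = Edge (vx g W (Suc i)) (fst (W ! i)) (1 - (s - real i))"
proof -
  show i1: "real i \<le> s" "s < real i + 1" using assms by linarith+
  then show i2: "i < length W" using assms by linarith
  show "snd (W ! i) \<Longrightarrow> word_path G g W s = Edge (vx g W i) (fst (W ! i)) (s - real i)"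
    using assms by (simp add: word_path_def vx_def Let_def)
  assume "\<not> snd (W ! i)" "g \<in> carrier G" "is_word X W"
  then show "word_path G g W s = Edge (vx g W (Suc i)) (fst (W ! i)) (1 - (s - real i))"
    using assms i2 by (simp add: word_path_def Let_def vx_Suc letter_val_def vx_def[symmetric])
qed

lemma word_path_N: "word_path G g W (real (length W)) = Vert (vx g W (length W))"
  by (simp add: word_path_def vx_def)

lemma ends_path:
  assumes g: "g \<in> carrier G" and W: "is_word X W" and s: "0 \<le> s" "s \<le> real (length W)"
    and e: "(u, a) \<in> set (ends G (word_path G g W s))"
  shows "\<exists>j \<le> length W. u = vx g W j \<and> a = \<bar>s - real j\<bar> \<and> \<bar>s - real j\<bar> \<le> 1"
proof (cases "s < real (length W)")
  case True
  define i where "i = nat \<lfloor>s\<rfloor>"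
  note L = word_path_lt[OF s(1) True i_def]
  show ?thesis
  proof (cases "snd (W ! i)")
    case True
    have "u = vx g W i \<and> a = s - i \<or> u = vx g W (Suc i) \<and> a = 1 - (s - i)"
      using e L(4)[OF True] vx_Suc[OF g W L(1)] True by (auto simp: letter_val_def)
    then show ?thesis
    proof
      assume "u = vx g W i \<and> a = s - i" then show ?thesis using L(1-3)
        by (intro exI[of _ i]) auto
    next
      assume "u = vx g W (Suc i) \<and> a = 1 - (s - i)" then show ?thesis using L(1-3)
        by (intro exI[of _ "Suc i"]) auto
    qed
  next
    case False
    have "u = vx g W (Suc i) \<and> a = 1 - (s - i) \<or> u = vx g W i \<and> a = s - i"
      using e L(5)[OF False g W] vx_Suc_F[OF g W L(1) False] by auto
    then show ?thesis
    proof
      assume "u = vx g W (Suc i) \<and> a = 1 - (s - i)" then show ?thesis using L(1-3)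
        by (intro exI[of _ "Suc i"]) auto
    next
      assume "u = vx g W i \<and> a = s - i" then show ?thesis using L(1-3)
        by (intro exI[of _ i]) auto
    qed
  qed
next
  case False
  then have "s = length W" using s by auto
  then show ?thesis using e by (auto simp: word_path_N)
qed

lemma ends_path_in:
  assumes g: "g \<in> carrier G" and W: "is_word X W" and s: "0 \<le> s" "s < real (length W)"
    and i: "i = nat \<lfloor>s\<rfloor>"
  shows "(vx g W i, s - real i) \<in> set (ends G (word_path G g W s))"
    "(vx g W (Suc i), real (Suc i) - s) \<in> set (ends G (word_path G g W s))"
proof -
  note L = word_path_lt[OF s i]
  have "(vx g W i, s - real i) \<in> set (ends G (word_path G g W s)) \<and>
    (vx g W (Suc i), real (Suc i) - s) \<in> set (ends G (word_path G g W s))"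
  proof (cases "snd (W ! i)")
    case True
    then show ?thesis using L(4)[OF True] vx_Suc[OF g W L(1)] by (auto simp: letter_val_def)
  next
    case False
    then show ?thesis using L(5)[OF False g W] vx_Suc_F[OF g W L(1) False] by auto
  qed
  then show "(vx g W i, s - real i) \<in> set (ends G (word_path G g W s))"
    "(vx g W (Suc i), real (Suc i) - s) \<in> set (ends G (word_path G g W s))" by auto
qed

end


context cay begin

definition CL where "CL p q = [a + real (d u v) + b. (u, a) \<leftarrow> ends G p, (v, b) \<leftarrow> ends G q] @ same_edge_dist p q"

lemma cdist_CL: "cdist G X p q = Min (set (CL p q))" by (simp add: cdist_def CL_def)

lemma ends_ne: "ends G p \<noteq> []" by (cases p) auto

lemma CL_set: "e \<in> set (CL p q) \<longleftrightarrow> (\<exists>u a v b. (u, a) \<in> set (ends G p) \<and> (v, b) \<in> set (ends G q) \<and> e = a + real (d u v) + b)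
   \<or> e \<in> set (same_edge_dist p q)"
  unfolding CL_def
proof
  assume "e \<in> set ([a + real (d u v) + b. (u, a) \<leftarrow> ends G p, (v, b) \<leftarrow> ends G q] @ same_edge_dist p q)"
  then show "(\<exists>u a v b. (u, a) \<in> set (ends G p) \<and> (v, b) \<in> set (ends G q) \<and> e = a + real (d u v) + b)
   \<or> e \<in> set (same_edge_dist p q)" by auto
next
  assume "(\<exists>u a v b. (u, a) \<in> set (ends G p) \<and> (v, b) \<in> set (ends G q) \<and> e = a + real (d u v) + b)
   \<or> e \<in> set (same_edge_dist p q)"
  then show "e \<in> set ([a + real (d u v) + b. (u, a) \<leftarrow> ends G p, (v, b) \<leftarrow> ends G q] @ same_edge_dist p q)"
  proof
    assume "\<exists>u a v b. (u, a) \<in> set (ends G p) \<and> (v, b) \<in> set (ends G q) \<and> e = a + real (d u v) + b"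
    then obtain u a v b where "(u, a) \<in> set (ends G p)" "(v, b) \<in> set (ends G q)" "e = a + real (d u v) + b" by blast
    then have "e \<in> set (concat (map (\<lambda>(u, a). map (\<lambda>(v, b). a + real (d u v) + b) (ends G q)) (ends G p)))"
      unfolding set_concat set_map by (force intro!: bexI[of _ "(u,a)"] image_eqI[of _ _ "(v,b)"])
    then show ?thesis by simp
  qed simp
qed

lemma CL_ne: "set (CL p q) \<noteq> {}"
proof -
  obtain u a where "(u, a) \<in> set (ends G p)" by (cases p) auto
  moreover obtain v b where "(v, b) \<in> set (ends G q)" by (cases q) auto
  ultimately have "a + real (d u v) + b \<in> set (CL p q)" unfolding CL_set by blast
  then show ?thesis by auto
qed

lemma cdist_le: "e \<in> set (CL p q) \<Longrightarrow> cdist G X p q \<le> e"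
  unfolding cdist_CL by (rule Min_le) auto

lemma cdist_ge: "(\<And>e. e \<in> set (CL p q) \<Longrightarrow> r \<le> e) \<Longrightarrow> r \<le> cdist G X p q"
proof -
  assume a: "\<And>e. e \<in> set (CL p q) \<Longrightarrow> r \<le> e"
  have ne: "set (CL p q) \<noteq> {}" by (rule CL_ne)
  show ?thesis unfolding cdist_CL by (rule Min.boundedI[OF finite_set ne a])
qed

lemma cdist_ex: "\<exists>e \<in> set (CL p q). cdist G X p q = e"
proof -
  have "cdist G X p q \<in> set (CL p q)" unfolding cdist_CL by (rule Min_in[OF finite_set CL_ne])
  then show ?thesis by blast
qed

lemma same_edge_D: "e \<in> set (same_edge_dist p q) \<Longrightarrow> \<exists>g x s t. p = Edge g x s \<and> q = Edge g x t \<and> e = \<bar>s - t\<bar>"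
  by (cases p; cases q) (auto split: if_splits)

lemma valid_ends: "valid_point G X p \<Longrightarrow> (u, a) \<in> set (ends G p) \<Longrightarrow> u \<in> carrier G"
  using XG by (cases p) auto

lemma cdist_sym: assumes "valid_point G X p" "valid_point G X q" shows "cdist G X p q = cdist G X q p"
proof -
  have "set (CL p q) = set (CL q p)"
  proof -
    have "e \<in> set (CL p q) \<Longrightarrow> e \<in> set (CL q p)" if "valid_point G X p" "valid_point G X q" for e p q
    proof -
      assume "e \<in> set (CL p q)"
      then consider u a v b where "(u, a) \<in> set (ends G p)" "(v, b) \<in> set (ends G q)" "e = a + real (d u v) + b"
        | "e \<in> set (same_edge_dist p q)" using CL_set by blast
      then show ?thesis
      proof cases
        case 1
        then have "e = b + real (d v u) + a" using d_sym' valid_ends that by simp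
        then show ?thesis using 1 CL_set by blast
      next
        case 2
        then have "e \<in> set (same_edge_dist q p)" by (cases p; cases q) (auto split: if_splits)
        then show ?thesis unfolding CL_set by simp
      qed
    qed
    then show ?thesis using assms by blast
  qed
  then show ?thesis unfolding cdist_CL by simp
qed

definition geo where "geo g W \<longleftrightarrow> is_word X W \<and> d g (vx g W (length W)) = length W"

lemma geo_d: assumes g: "g \<in> carrier G" and geo: "geo g W" and ij: "i \<le> j" "j \<le> length W"
  shows "d (vx g W i) (vx g W j) = j - i" "d (vx g W j) (vx g W i) = j - i"
proof -
  have W: "is_word X W" using geo by (simp add: geo_def)
  have "length W \<le> d g (vx g W i) + d (vx g W i) (vx g W j) + d (vx g W j) (vx g W (length W))"
    using geo d_tri[of g "vx g W i" "vx g W (length W)"] d_tri[of "vx g W i" "vx g W j" "vx g W (length W)"]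
      vx_carrier[OF g W] g unfolding geo_def by fastforce
  moreover have "d g (vx g W i) \<le> i" using d_vx_le[OF g W, of 0 i] g by simp
  moreover have "d (vx g W j) (vx g W (length W)) \<le> length W - j" using d_vx_le[OF g W ij(2)] .
  moreover have "d (vx g W i) (vx g W j) \<le> j - i" using d_vx_le[OF g W ij(1)] .
  ultimately show "d (vx g W i) (vx g W j) = j - i" using ij by linarith
  then show "d (vx g W j) (vx g W i) = j - i" using d_sym' vx_carrier[OF g W] by metis
qed

lemma geo_inj: assumes g: "g \<in> carrier G" and geo: "geo g W" and ij: "i \<le> length W" "j \<le> length W"
  and e: "vx g W i = vx g W j" shows "i = j"
proof -
  have W: "is_word X W" using geo by (simp add: geo_def)
  have "d (vx g W i) (vx g W j) = 0" using e d_refl vx_carrier[OF g W] by simp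
  then show ?thesis using geo_d[OF g geo] ij by (cases "i \<le> j") (fastforce, force)
qed

end


context cay begin

lemma path_valid: assumes g: "g \<in> carrier G" and W: "is_word X W" and s: "0 \<le> s" "s \<le> real (length W)"
  shows "valid_point G X (word_path G g W s)"
proof (cases "s < real (length W)")
  case True
  define i where "i = nat \<lfloor>s\<rfloor>"
  note L = word_path_lt[OF s(1) True i_def]
  have x: "fst (W ! i) \<in> X" using fst_nth_X[OF W L(1)] .
  show ?thesis
  proof (cases "snd (W ! i)")
    case True
    then show ?thesis using L(2,3) L(4)[OF True] x vx_carrier[OF g W] by auto
  next
    case False
    then show ?thesis using L(2,3) L(5)[OF False g W] x vx_carrier[OF g W] by auto
  qed
next
  case False
  then have "s = length W" using s by auto
  then show ?thesis using vx_carrier[OF g W] by (simp add: word_path_N)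
qed

lemma d_vx_abs: assumes g: "g \<in> carrier G" and geo: "geo g W" and ij: "i \<le> length W" "j \<le> length W"
  shows "real (d (vx g W i) (vx g W j)) = \<bar>real i - real j\<bar>"
proof (cases "i \<le> j")
  case True then show ?thesis using geo_d(1)[OF g geo True ij(2)] by simp
next
  case False then show ?thesis using geo_d(2)[OF g geo _ ij(1), of j] by simp
qed

lemma path_lower: assumes g: "g \<in> carrier G" and geo: "geo g W"
  and s: "0 \<le> s" "s \<le> real (length W)" and t: "0 \<le> t" "t \<le> real (length W)"
  and e: "e \<in> set (CL (word_path G g W s) (word_path G g W t))"
  shows "\<bar>s - t\<bar> \<le> e"
proof -
  have W: "is_word X W" using geo by (simp add: geo_def)
  consider u a v b where "(u, a) \<in> set (ends G (word_path G g W s))" "(v, b) \<in> set (ends G (word_path G g W t))" "e = a + real (d u v) + b"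
        | "e \<in> set (same_edge_dist (word_path G g W s) (word_path G g W t))" using e CL_set by blast
  then show ?thesis
  proof cases
    case 1
    obtain j where j: "j \<le> length W" "u = vx g W j" "a = \<bar>s - real j\<bar>" using ends_path[OF g W s 1(1)] by blast
    obtain j' where j': "j' \<le> length W" "v = vx g W j'" "b = \<bar>t - real j'\<bar>" using ends_path[OF g W t 1(2)] by blast
    have "e = \<bar>s - real j\<bar> + \<bar>real j - real j'\<bar> + \<bar>t - real j'\<bar>"
      using 1(3) j j' d_vx_abs[OF g geo j(1) j'(1)] by simp
    then show ?thesis by (simp add: abs_if split: if_splits)
  next
    case 2
    obtain g0 x s' t' where E: "word_path G g W s = Edge g0 x s'" "word_path G g W t = Edge g0 x t'" "e = \<bar>s' - t'\<bar>"
      using same_edge_D[OF 2] by blast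
    have sl: "s < real (length W)" using E(1) s by (cases "s < real (length W)") (auto simp: word_path_N)
    have tl: "t < real (length W)" using E(2) t by (cases "t < real (length W)") (auto simp: word_path_N)
    define i where "i = nat \<lfloor>s\<rfloor>"
    define j where "j = nat \<lfloor>t\<rfloor>"
    note Ls = word_path_lt[OF s(1) sl i_def]
    note Lt = word_path_lt[OF t(1) tl j_def]
    have inj: "\<And>a b. a \<le> length W \<Longrightarrow> b \<le> length W \<Longrightarrow> vx g W a = vx g W b \<Longrightarrow> a = b"
      using geo_inj[OF g geo] by blast
    show ?thesis
    proof (cases "snd (W ! i)"; cases "snd (W ! j)")
      assume a1: "snd (W ! i)" and a2: "snd (W ! j)"
      have "vx g W i = vx g W j" using E Ls(4)[OF a1] Lt(4)[OF a2] by simp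
      then have "i = j" using inj Ls(1) Lt(1) by simp
      then show ?thesis using E Ls(4)[OF a1] Lt(4)[OF a2] by auto
    next
      assume a1: "\<not> snd (W ! i)" and a2: "\<not> snd (W ! j)"
      have "vx g W (Suc i) = vx g W (Suc j)" using E Ls(5)[OF a1 g W] Lt(5)[OF a2 g W] by simp
      then have "i = j" using inj[of "Suc i" "Suc j"] Ls(1) Lt(1) by simp
      then show ?thesis using E Ls(5)[OF a1 g W] Lt(5)[OF a2 g W] by auto
    next
      assume a1: "snd (W ! i)" and a2: "\<not> snd (W ! j)"
      have e1: "vx g W i = vx g W (Suc j)" and e2: "fst (W ! i) = fst (W ! j)"
        using E Ls(4)[OF a1] Lt(5)[OF a2 g W] by simp_all
      have "vx g W (Suc i) = vx g W i \<otimes> fst (W ! i)" using vx_Suc[OF g W Ls(1)] a1 by (simp add: letter_val_def)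
      also have "\<dots> = vx g W j" using e1 e2 vx_Suc_F[OF g W Lt(1) a2] by simp
      finally have "Suc i = j" using inj[of "Suc i" j] Ls(1) Lt(1) by simp
      moreover have "i = Suc j" using e1 inj[of i "Suc j"] Ls(1) Lt(1) by simp
      ultimately show ?thesis by simp
    next
      assume a1: "\<not> snd (W ! i)" and a2: "snd (W ! j)"
      have e1: "vx g W j = vx g W (Suc i)" and e2: "fst (W ! i) = fst (W ! j)"
        using E Lt(4)[OF a2] Ls(5)[OF a1 g W] by simp_all
      have "vx g W (Suc j) = vx g W j \<otimes> fst (W ! j)" using vx_Suc[OF g W Lt(1)] a2 by (simp add: letter_val_def)
      also have "\<dots> = vx g W i" using e1 e2 vx_Suc_F[OF g W Ls(1) a1] by simp
      finally have "Suc j = i" using inj[of "Suc j" i] Ls(1) Lt(1) by simp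
      moreover have "j = Suc i" using e1 inj[of j "Suc i"] Ls(1) Lt(1) by simp
      ultimately show ?thesis by simp
    qed
  qed
qed

lemma path_upper: assumes g: "g \<in> carrier G" and geo: "geo g W"
  and st: "0 \<le> s" "s \<le> t" "t \<le> real (length W)"
  shows "cdist G X (word_path G g W s) (word_path G g W t) \<le> t - s"
proof -
  have W: "is_word X W" using geo by (simp add: geo_def)
  have s: "0 \<le> s" "s \<le> real (length W)" and t: "0 \<le> t" "t \<le> real (length W)" using st by auto
  show ?thesis
  proof (cases "s < real (length W)")
    case False
    then have "s = length W" "t = length W" using st by auto
    then show ?thesis using cdist_le[of 0 "word_path G g W s" "word_path G g W t"] vx_carrier[OF g W]
      by (simp add: word_path_N CL_set)
  next
    case sl: True
    define i where "i = nat \<lfloor>s\<rfloor>"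
    note Ls = word_path_lt[OF s(1) sl i_def]
    show ?thesis
    proof (cases "t < real (length W) \<and> nat \<lfloor>t\<rfloor> = i")
      case True
      then have tl: "t < real (length W)" and ti: "i = nat \<lfloor>t\<rfloor>" by auto
      note Lt = word_path_lt[OF t(1) tl ti]
      have "\<bar>s - t\<bar> \<in> set (CL (word_path G g W s) (word_path G g W t))"
      proof (cases "snd (W ! i)")
        case True then show ?thesis using Ls(4)[OF True] Lt(4)[OF True] by (simp add: CL_set)
      next
        case False then show ?thesis using Ls(5)[OF False g W] Lt(5)[OF False g W] by (simp add: CL_set abs_minus_commute)
      qed
      then show ?thesis using cdist_le st by fastforce
    next
      case False
      obtain j where j: "Suc i \<le> j" "j \<le> length W" "real j \<le> t"
        "(vx g W j, t - real j) \<in> set (ends G (word_path G g W t))"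
      proof (cases "t < real (length W)")
        case True
        define j where "j = nat \<lfloor>t\<rfloor>"
        note Lt = word_path_lt[OF t(1) True j_def]
        have "i \<le> j" using st unfolding i_def j_def by (simp add: floor_mono nat_mono)
        then show ?thesis using that[of j] False True Lt(1,2) ends_path_in(1)[OF g W t(1) True j_def] j_def by force
      next
        case False
        then show ?thesis using that[of "length W"] Ls(1) t by (simp add: word_path_N)
      qed
      have e: "real (Suc i) - s + real (d (vx g W (Suc i)) (vx g W j)) + (t - real j)
          \<in> set (CL (word_path G g W s) (word_path G g W t))"
        using ends_path_in(2)[OF g W s(1) sl i_def] j(4) unfolding CL_set by blast
      have "real (d (vx g W (Suc i)) (vx g W j)) = real j - real (Suc i)"
        using geo_d(1)[OF g geo j(1,2)] j(1) by simp
      then show ?thesis using cdist_le[OF e] by simp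
    qed
  qed
qed

lemma geo_path: assumes g: "g \<in> carrier G" and geo: "geo g W"
  shows "geodesic G X (word_path G g W) (real (length W))"
proof -
  have W: "is_word X W" using geo by (simp add: geo_def)
  have le: "cdist G X (word_path G g W s) (word_path G g W t) = t - s"
    if "0 \<le> s" "s \<le> t" "t \<le> real (length W)" for s t
  proof -
    have "\<bar>s - t\<bar> \<le> cdist G X (word_path G g W s) (word_path G g W t)"
      by (rule cdist_ge, rule path_lower[OF g geo]) (use that in auto)
    then show ?thesis using path_upper[OF g geo that] that by linarith
  qed
  show ?thesis unfolding geodesic_def
  proof (intro conjI ballI)
    fix s assume "s \<in> {0..real (length W)}"
    then show "valid_point G X (word_path G g W s)" using path_valid[OF g W] by auto
  next
    fix s t assume s: "s \<in> {0..real (length W)}" and t: "t \<in> {0..real (length W)}"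
    show "cdist G X (word_path G g W s) (word_path G g W t) = \<bar>s - t\<bar>"
    proof (cases "s \<le> t")
      case True then show ?thesis using le s t by auto
    next
      case False
      have "cdist G X (word_path G g W s) (word_path G g W t) = cdist G X (word_path G g W t) (word_path G g W s)"
        using path_valid[OF g W] s t by (intro cdist_sym) auto
      then show ?thesis using le[of t s] s t False by auto
    qed
  qed simp
qed

end


context cay begin

lemma ends_nonneg: "valid_point G X p \<Longrightarrow> (u, a) \<in> set (ends G p) \<Longrightarrow> 0 \<le> a"
  by (cases p) auto

lemma cdist_nonneg: assumes "valid_point G X p" "valid_point G X q" shows "0 \<le> cdist G X p q"
proof (rule cdist_ge)
  fix e assume "e \<in> set (CL p q)"
  then consider u a v b where "(u, a) \<in> set (ends G p)" "(v, b) \<in> set (ends G q)" "e = a + real (d u v) + b"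
        | "e \<in> set (same_edge_dist p q)" using CL_set by blast
  then show "0 \<le> e"
  proof cases
    case 1 then show ?thesis using ends_nonneg assms by fastforce
  next
    case 2 then show ?thesis using same_edge_D by fastforce
  qed
qed

lemma path_start: assumes a: "a \<in> carrier G" and W: "is_word X W"
  shows "cdist G X (Vert a) (word_path G a W 0) = 0"
proof -
  have "0 \<in> set (CL (Vert a) (word_path G a W 0))"
  proof (cases "0 < real (length W)")
    case True
    have "(vx a W 0, 0 - real 0) \<in> set (ends G (word_path G a W 0))"
      using ends_path_in(1)[OF a W _ True] by simp
    then show ?thesis unfolding CL_set using a by (force intro!: exI[of _ a])
  next
    case False
    then have "word_path G a W 0 = Vert a" using word_path_N[of a W] a by simp
    then show ?thesis using a by (simp add: CL_set)
  qed
  then have "cdist G X (Vert a) (word_path G a W 0) \<le> 0" by (rule cdist_le)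
  moreover have "0 \<le> cdist G X (Vert a) (word_path G a W 0)"
    using cdist_nonneg path_valid[OF a W] a by simp
  ultimately show ?thesis by simp
qed

lemma d_vx_abs_le: assumes g: "g \<in> carrier G" and W: "is_word X W"
  shows "real (d (vx g W i) (vx g W j)) \<le> \<bar>real i - real j\<bar>"
proof (cases "i \<le> j")
  case True then show ?thesis using d_vx_le[OF g W True] by simp
next
  case False
  then have "d (vx g W j) (vx g W i) \<le> i - j" using d_vx_le[OF g W, of j i] by simp
  then show ?thesis using d_sym'[OF vx_carrier[OF g W] vx_carrier[OF g W], of i j] False by simp
qed

lemma near_vertex: assumes a: "a \<in> carrier G" and S: "is_word X S" and t0: "t0 \<le> length S"
  and q: "valid_point G X q" and le: "cdist G X (word_path G a S (real t0)) q \<le> r"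
  shows "\<exists>v b. (v, b) \<in> set (ends G q) \<and> real (d (vx a S t0) v) \<le> r"
proof -
  have pv: "valid_point G X (word_path G a S (real t0))" using path_valid[OF a S] t0 by simp
  obtain e where e: "e \<in> set (CL (word_path G a S (real t0)) q)" "cdist G X (word_path G a S (real t0)) q = e"
    using cdist_ex by blast
  consider u a' v b where "(u, a') \<in> set (ends G (word_path G a S (real t0)))" "(v, b) \<in> set (ends G q)" "e = a' + real (d u v) + b"
        | "e \<in> set (same_edge_dist (word_path G a S (real t0)) q)" using e(1) CL_set by blast
  then show ?thesis
  proof cases
    case 1
    obtain j where j: "j \<le> length S" "u = vx a S j" "a' = \<bar>real t0 - real j\<bar>"
      using ends_path[OF a S _ _ 1(1)] t0 by auto
    have "d (vx a S t0) v \<le> d (vx a S t0) u + d u v"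
      using d_tri vx_carrier[OF a S] j(2) valid_ends[OF q 1(2)] by blast
    moreover have "real (d (vx a S t0) u) \<le> a'" using d_vx_abs_le[OF a S] j by simp
    moreover have "0 \<le> b" using ends_nonneg[OF q 1(2)] .
    ultimately show ?thesis using 1 e le by (intro exI[of _ v] exI[of _ b]) auto
  next
    case 2
    obtain g0 x s' t' where E: "word_path G a S (real t0) = Edge g0 x s'" "q = Edge g0 x t'"
      using same_edge_D[OF 2] by blast
    have sl: "real t0 < real (length S)" using E(1) t0
      by (cases "real t0 < real (length S)") (auto simp: word_path_N)
    have "(vx a S t0, real t0 - real t0) \<in> set (ends G (word_path G a S (real t0)))"
      using ends_path_in(1)[OF a S _ sl] by simp
    then have "vx a S t0 = g0 \<or> vx a S t0 = g0 \<otimes> x" using E(1) by auto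
    moreover have "0 \<le> r" using le cdist_nonneg[OF pv q] by simp
    ultimately show ?thesis
    proof (elim disjE)
      assume "vx a S t0 = g0" "0 \<le> r" then show ?thesis using E(2) vx_carrier[OF a S, of t0]
        by (intro exI[of _ g0] exI[of _ t']) auto
    next
      assume "vx a S t0 = g0 \<otimes> x" "0 \<le> r" then show ?thesis using E(2) vx_carrier[OF a S, of t0]
        by (intro exI[of _ "g0 \<otimes> x"] exI[of _ "1 - t'"]) auto
    qed
  qed
qed

lemma slim_discrete:
  assumes hyp: "hyperbolic G X r"
    and z: "z \<in> carrier G" and a: "a \<in> carrier G" and c: "c \<in> carrier G"
    and W1: "geo z W1" "vx z W1 (length W1) = a"
    and S: "geo a S" "vx a S (length S) = c"
    and W3: "geo c W3" "vx c W3 (length W3) = z"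
    and t0: "t0 \<le> length S"
  shows "\<exists>p \<in> carrier G. (d z p + d p a = d z a \<or> d c p + d p z = d c z) \<and> real (d (vx a S t0) p) \<le> r"
proof -
  have iw: "is_word X W1" "is_word X S" "is_word X W3" using W1 S W3 by (auto simp: geo_def)
  let ?\<alpha> = "word_path G z W1" and ?\<beta> = "word_path G a S" and ?\<gamma> = "word_path G c W3"
  have g: "geodesic G X ?\<alpha> (length W1)" "geodesic G X ?\<beta> (length S)" "geodesic G X ?\<gamma> (length W3)"
    using geo_path z a c W1 S W3 by auto
  have e: "cdist G X (?\<alpha> (length W1)) (?\<beta> 0) = 0" "cdist G X (?\<beta> (length S)) (?\<gamma> 0) = 0"
    "cdist G X (?\<gamma> (length W3)) (?\<alpha> 0) = 0"
    using path_start[OF a iw(2)] path_start[OF c iw(3)] path_start[OF z iw(1)] W1 S W3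
    by (simp_all add: word_path_N)
  have "side_slim G X r ?\<beta> (length S) ?\<gamma> (length W3) ?\<alpha> (length W1)"
    using hyp g e unfolding hyperbolic_def by blast
  then have "in_nbhd G X r (?\<beta> t0) ?\<gamma> (length W3) \<or> in_nbhd G X r (?\<beta> t0) ?\<alpha> (length W1)"
    unfolding side_slim_def using t0 by auto
  then show ?thesis
  proof
    assume "in_nbhd G X r (?\<beta> t0) ?\<gamma> (length W3)"
    then obtain t where t: "0 \<le> t" "t \<le> real (length W3)" "cdist G X (?\<beta> t0) (?\<gamma> t) \<le> r"
      unfolding in_nbhd_def by auto
    obtain v b where vb: "(v, b) \<in> set (ends G (?\<gamma> t))" "real (d (vx a S t0) v) \<le> r"
      using near_vertex[OF a iw(2) t0 path_valid[OF c iw(3) t(1,2)] t(3)] by blast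
    obtain j where j: "j \<le> length W3" "v = vx c W3 j" using ends_path[OF c iw(3) t(1,2) vb(1)] by blast
    have "d c v + d v z = d c z" using geo_d(1)[OF c W3(1) _ j(1), of 0] geo_d(1)[OF c W3(1) j(1) le_refl]
      geo_d(1)[OF c W3(1) _ le_refl, of 0] j W3(2) c by simp
    then show ?thesis using vb j vx_carrier[OF c iw(3)] by blast
  next
    assume "in_nbhd G X r (?\<beta> t0) ?\<alpha> (length W1)"
    then obtain t where t: "0 \<le> t" "t \<le> real (length W1)" "cdist G X (?\<beta> t0) (?\<alpha> t) \<le> r"
      unfolding in_nbhd_def by auto
    obtain v b where vb: "(v, b) \<in> set (ends G (?\<alpha> t))" "real (d (vx a S t0) v) \<le> r"
      using near_vertex[OF a iw(2) t0 path_valid[OF z iw(1) t(1,2)] t(3)] by blast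
    obtain j where j: "j \<le> length W1" "v = vx z W1 j" using ends_path[OF z iw(1) t(1,2) vb(1)] by blast
    have "d z v + d v a = d z a" using geo_d(1)[OF z W1(1) _ j(1), of 0] geo_d(1)[OF z W1(1) j(1) le_refl]
      geo_d(1)[OF z W1(1) _ le_refl, of 0] j W1(2) z by simp
    then show ?thesis using vb j vx_carrier[OF z iw(1)] by blast
  qed
qed

end


context cay begin

lemma geo_ex: assumes "u \<in> carrier G" "v \<in> carrier G" shows "\<exists>W. geo u W \<and> vx u W (length W) = v"
proof -
  obtain w where w: "is_word X w" "length w = d u v" "word_eval G w = inv u \<otimes> v" using d_ex assms by blast
  have "vx u w (length w) = v" unfolding vx_N w(3) using assms by (simp add: m_assoc[symmetric])
  then show ?thesis using w by (intro exI[of _ w]) (simp add: geo_def)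
qed

lemma seg_geo: assumes g: "g \<in> carrier G" and U: "is_word X U" and ij: "i \<le> j" "j \<le> length U"
  and dd: "d (vx g U i) (vx g U j) = j - i"
  shows "geo (vx g U i) (take (j - i) (drop i U))" "vx (vx g U i) (take (j - i) (drop i U)) (length (take (j - i) (drop i U))) = vx g U j"
    "\<And>t. t \<le> j - i \<Longrightarrow> vx (vx g U i) (take (j - i) (drop i U)) t = vx g U (i + t)"
proof -
  have l: "length (take (j - i) (drop i U)) = j - i" using ij by simp
  have v: "\<And>t. t \<le> j - i \<Longrightarrow> vx (vx g U i) (take (j - i) (drop i U)) t = vx g U (i + t)"
  proof -
    fix t assume t: "t \<le> j - i"
    have "vx g U (i + t) = vx g U i \<otimes> word_eval G (take t (drop i U))" using vx_drop[OF g U, of i "i+t"] by simp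
    then show "vx (vx g U i) (take (j - i) (drop i U)) t = vx g U (i + t)" using t by (simp add: vx_def min_def)
  qed
  then show "\<And>t. t \<le> j - i \<Longrightarrow> vx (vx g U i) (take (j - i) (drop i U)) t = vx g U (i + t)" .
  show "vx (vx g U i) (take (j - i) (drop i U)) (length (take (j - i) (drop i U))) = vx g U j"
    using v[of "j - i"] l ij by simp
  then show "geo (vx g U i) (take (j - i) (drop i U))" using dd l U
    by (simp add: geo_def is_word_take is_word_drop)
qed

lemma step:
  assumes hyp: "hyperbolic G X (real \<delta>)" and g: "g \<in> carrier G" and U: "is_word X U"
    and z: "z \<in> carrier G"
    and ikj: "i \<le> k" "k \<le> j" "j \<le> length U"
    and dd: "d (vx g U i) (vx g U j) = j - i"
    and H: "d z (vx g U i) + (k - i) \<le> d z (vx g U k) + 2 * \<delta>"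
    and big: "2 * \<delta> < k - i"
  shows "d z (vx g U k) + (j - k) \<le> d z (vx g U j) + 2 * \<delta>"
proof -
  let ?a = "vx g U i" and ?b = "vx g U k" and ?c = "vx g U j" and ?S = "take (j - i) (drop i U)"
  have car: "\<And>i. vx g U i \<in> carrier G" using vx_carrier[OF g U] .
  have ij: "i \<le> j" using ikj by linarith
  note sg = seg_geo[OF g U ij ikj(3) dd]
  obtain W1 where W1: "geo z W1" "vx z W1 (length W1) = ?a" using geo_ex[OF z car] by blast
  obtain W3 where W3: "geo ?c W3" "vx ?c W3 (length W3) = z" using geo_ex[OF car z] by blast
  have bb: "vx ?a ?S (k - i) = ?b" using sg(3)[of "k - i"] ikj by simp
  have kl: "k - i \<le> length ?S" using ikj by simp
  obtain p where p: "p \<in> carrier G" "d z p + d p ?a = d z ?a \<or> d ?c p + d p z = d ?c z"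
      "real (d ?b p) \<le> real \<delta>"
    using slim_discrete[OF hyp z car car W1 sg(1,2) W3 kl] unfolding bb by blast
  have pb: "d ?b p \<le> \<delta>" using p(3) by simp
  have lS: "length ?S = j - i" using ikj by simp
  have dik1: "d ?a ?b = k - i"
  proof -
    have "d (vx ?a ?S 0) (vx ?a ?S (k - i)) = k - i - 0" by (rule geo_d(1)[OF car sg(1) _ kl]) simp
    then show ?thesis using bb car[of i] by simp
  qed
  have dik2: "d ?b ?c = j - k"
  proof -
    have "d (vx ?a ?S (k - i)) (vx ?a ?S (j - i)) = (j - i) - (k - i)"
      by (rule geo_d(1)[OF car sg(1)]) (use ikj lS in simp_all)
    moreover have "vx ?a ?S (j - i) = ?c" using sg(3)[of "j - i"] ikj by simp
    ultimately show ?thesis using bb ikj by simp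
  qed
  have t1: "d z ?b \<le> d z p + d p ?b" by (rule d_tri[OF z p(1) car])
  have sym1: "d p ?b = d ?b p" by (rule d_sym'[OF p(1) car])
  from p(2) show ?thesis
  proof
    assume A: "d z p + d p ?a = d z ?a"
    have t2: "d ?a ?b \<le> d ?a p + d p ?b" by (rule d_tri[OF car p(1) car])
    have sym2: "d ?a p = d p ?a" by (rule d_sym'[OF car p(1)])
    have "k - i \<le> d p ?a + \<delta>" using t2 sym1 sym2 dik1 pb by linarith
    then have "d z ?a + (k - i) \<le> d z p + d p ?a + d p ?a + \<delta>" using A by linarith
    then show ?thesis using H big t1 sym1 pb A t2 sym2 dik1 by linarith
  next
    assume C: "d ?c p + d p z = d ?c z"
    have t2: "d ?b ?c \<le> d ?b p + d p ?c" by (rule d_tri[OF car p(1) car])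
    have s3: "d ?c p = d p ?c" by (rule d_sym'[OF car p(1)])
    have s4: "d p z = d z p" by (rule d_sym'[OF p(1) z])
    have s5: "d ?c z = d z ?c" by (rule d_sym'[OF car z])
    show ?thesis using C t1 t2 sym1 s3 s4 s5 dik2 pb by linarith
  qed
qed

end


context cay begin

lemma chain:
  assumes hyp: "hyperbolic G X (real \<delta>)" and g: "g \<in> carrier G" and U: "is_word X U"
    and m: "2 * \<delta> < m"
    and LG: "\<And>i j. i \<le> j \<Longrightarrow> j \<le> length U \<Longrightarrow> j - i \<le> 2 * m \<Longrightarrow> d (vx g U i) (vx g U j) = j - i"
  shows "i + l * m \<le> length U \<Longrightarrow> l * m \<le> d (vx g U i) (vx g U (i + l * m)) + 2 * \<delta> * l \<and>
    (\<forall>j. i + l * m \<le> j \<longrightarrow> j \<le> length U \<longrightarrow> j \<le> i + (l + 1) * m \<longrightarrow>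
       d (vx g U i) (vx g U (i + l * m)) + (j - (i + l * m)) \<le> d (vx g U i) (vx g U j) + 2 * \<delta>)"
proof (induction l)
  case 0
  have "d (vx g U i) (vx g U j) = j - i" if "i \<le> j" "j \<le> length U" "j \<le> i + m" for j
    using LG that by auto
  then show ?case using vx_carrier[OF g U] by auto
next
  case (Suc l)
  have car: "\<And>i. vx g U i \<in> carrier G" using vx_carrier[OF g U] .
  have le: "i + l * m \<le> length U" using Suc.prems by simp
  note IH = Suc.IH[OF le]
  have A: "d (vx g U i) (vx g U (i + l * m)) + m \<le> d (vx g U i) (vx g U (i + Suc l * m)) + 2 * \<delta>"
    using IH Suc.prems by (auto dest!: spec[of _ "i + Suc l * m"])
  have B: "d (vx g U i) (vx g U (i + Suc l * m)) + (j - (i + Suc l * m)) \<le> d (vx g U i) (vx g U j) + 2 * \<delta>"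
    if j: "i + Suc l * m \<le> j" "j \<le> length U" "j \<le> i + (Suc l + 1) * m" for j
  proof (rule step[OF hyp g U car[of i]])
    show "i + l * m \<le> i + Suc l * m" "i + Suc l * m \<le> j" "j \<le> length U" using j by auto
    show "d (vx g U (i + l * m)) (vx g U j) = j - (i + l * m)" using j by (intro LG) auto
    show "d (vx g U i) (vx g U (i + l * m)) + (i + Suc l * m - (i + l * m)) \<le> d (vx g U i) (vx g U (i + Suc l * m)) + 2 * \<delta>"
      using A by simp
    show "2 * \<delta> < i + Suc l * m - (i + l * m)" using m by simp
  qed
  show ?case using A B IH by auto
qed

lemma disc:
  assumes hyp: "hyperbolic G X (real \<delta>)" and g: "g \<in> carrier G" and U: "is_word X U"
    and m: "2 * \<delta> < m"
    and LG: "\<And>i j. i \<le> j \<Longrightarrow> j \<le> length U \<Longrightarrow> j - i \<le> 2 * m \<Longrightarrow> d (vx g U i) (vx g U j) = j - i"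
    and ij: "i \<le> j" "j \<le> length U"
  shows "j - i \<le> d (vx g U i) (vx g U j) + 2 * \<delta> * ((j - i) div m + 1)"
proof -
  define l where "l = (j - i) div m"
  have mp: "0 < m" using m by simp
  have l1: "l * m \<le> j - i" unfolding l_def using div_mult_mod_eq[of "j - i" m] by linarith
  have l2: "j - i < (l + 1) * m" unfolding l_def using mp
    by (metis add.commute div_mult_mod_eq mod_less_divisor add_mult_distrib mult_1 nat_add_left_cancel_less)
  note C = chain[OF hyp g U m LG, of i l]
  have "l * m \<le> d (vx g U i) (vx g U (i + l * m)) + 2 * \<delta> * l"
    and "d (vx g U i) (vx g U (i + l * m)) + (j - (i + l * m)) \<le> d (vx g U i) (vx g U j) + 2 * \<delta>"
    using C l1 l2 ij by auto
  then show ?thesis unfolding l_def[symmetric] using l1 by (simp add: algebra_simps)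
qed

end

context cay begin

definition CJ where "CJ V \<longleftrightarrow> (\<forall>W h. is_word X W \<longrightarrow> h \<in> carrier G \<longrightarrow>
        word_eval G W = inv h \<otimes> word_eval G V \<otimes> h \<longrightarrow> length V \<le> length W)"

lemma CJ_inv: assumes V: "is_word X V" and c: "CJ V" shows "CJ (word_inv V)"
  unfolding CJ_def
proof (intro allI impI)
  fix W h assume W: "is_word X W" and h: "h \<in> carrier G" and e: "word_eval G W = inv h \<otimes> word_eval G (word_inv V) \<otimes> h"
  have vc: "word_eval G V \<in> carrier G" using eval_carrier[OF V] .
  have "word_eval G (word_inv W) = inv (inv h \<otimes> inv (word_eval G V) \<otimes> h)"
    using e eval_inv[OF W] eval_inv[OF V] by simp
  also have "\<dots> = inv h \<otimes> word_eval G V \<otimes> h" using h vc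
    by (simp add: inv_mult_group m_assoc)
  finally have "length V \<le> length (word_inv W)"
    using c[unfolded CJ_def, rule_format, OF is_word_inv[OF W] h] by simp
  then show "length (word_inv V) \<le> length W" by simp
qed

lemma rot_eval: assumes V: "is_word X V"
  shows "word_eval G (rotate r V) = inv (word_eval G (take (r mod length V) V)) \<otimes> word_eval G V \<otimes> word_eval G (take (r mod length V) V)"
proof -
  let ?k = "r mod length V"
  have t: "word_eval G (take ?k V) \<in> carrier G" and dr: "word_eval G (drop ?k V) \<in> carrier G"
    using eval_carrier is_word_take is_word_drop V by auto
  have "word_eval G V = word_eval G (take ?k V) \<otimes> word_eval G (drop ?k V)"
    using eval_append[OF is_word_take[OF V] is_word_drop[OF V], of ?k ?k] by simp
  then have "inv (word_eval G (take ?k V)) \<otimes> word_eval G V \<otimes> word_eval G (take ?k V) = word_eval G (drop ?k V) \<otimes> word_eval G (take ?k V)"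
    using t dr by (simp add: m_assoc[symmetric])
  also have "\<dots> = word_eval G (rotate r V)"
    by (simp add: rotate_drop_take eval_append is_word_take is_word_drop V)
  finally show ?thesis by simp
qed

lemma nth_pow: "p < K * length V \<Longrightarrow> concat (replicate K V) ! p = V ! (p mod length V)"
proof (induction K arbitrary: p)
  case 0 then show ?case by simp
next
  case (Suc K)
  show ?case
  proof (cases "p < length V")
    case True then show ?thesis by (simp add: nth_append)
  next
    case False
    then have "p - length V < K * length V" using Suc.prems by simp
    then show ?thesis using Suc.IH False by (simp add: nth_append mod_if)
  qed
qed

lemma LG_pow: assumes V: "is_word X V" and c: "CJ V" and n: "0 < length V" and g: "g \<in> carrier G"
  and ij: "i \<le> j" "j \<le> length (concat (replicate K V))" "j - i \<le> length V"
  shows "d (vx g (concat (replicate K V)) i) (vx g (concat (replicate K V)) j) = j - i"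
proof -
  let ?U = "concat (replicate K V)"
  have U: "is_word X ?U" using V by (auto simp: is_word_def)
  have LU: "length ?U = K * length V" by (simp add: length_concat sum_list_replicate)
  define R where "R = rotate (i mod length V) V"
  have R: "is_word X R" "length R = length V" using V by (auto simp: R_def is_word_rotate)
  have seg: "take (j - i) (drop i ?U) = take (j - i) R"
  proof (rule nth_equalityI)
    show "length (take (j - i) (drop i ?U)) = length (take (j - i) R)" using ij R by simp
  next
    fix q assume "q < length (take (j - i) (drop i ?U))"
    then have q: "q < j - i" "i + q < K * length V" using ij LU by auto
    have "take (j - i) (drop i ?U) ! q = ?U ! (i + q)" using q ij by simp
    also have "\<dots> = V ! ((i + q) mod length V)" using nth_pow q by blast
    also have "\<dots> = R ! q" unfolding R_def using q ij n
      by (simp add: nth_rotate mod_add_right_eq add.commute)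
    also have "\<dots> = take (j - i) R ! q" using q by simp
    finally show "take (j - i) (drop i ?U) ! q = take (j - i) R ! q" .
  qed
  have le: "d (vx g ?U i) (vx g ?U j) \<le> j - i" using d_vx_le[OF g U ij(1)] .
  show ?thesis
  proof (rule ccontr)
    assume "d (vx g ?U i) (vx g ?U j) \<noteq> j - i"
    then have lt: "d (vx g ?U i) (vx g ?U j) < j - i" using le by simp
    obtain w where w: "is_word X w" "length w = d (vx g ?U i) (vx g ?U j)"
      "word_eval G w = inv (vx g ?U i) \<otimes> vx g ?U j"
      using d_ex vx_carrier[OF g U] by blast
    have ci: "vx g ?U i \<in> carrier G" using vx_carrier[OF g U] .
    have "vx g ?U j = vx g ?U i \<otimes> word_eval G (take (j - i) R)"
      using vx_drop[OF g U ij(1)] seg by simp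
    then have we: "word_eval G w = word_eval G (take (j - i) R)"
      using w(3) ci eval_carrier[OF is_word_take[OF R(1)]] by (simp add: m_assoc[symmetric])
    have "word_eval G (w @ drop (j - i) R) = word_eval G R"
      using eval_append[OF w(1) is_word_drop[OF R(1)]] we
        eval_append[OF is_word_take[OF R(1)] is_word_drop[OF R(1)], of "j - i" "j - i"] by simp
    also have "\<dots> = inv (word_eval G (take (i mod length V) V)) \<otimes> word_eval G V \<otimes> word_eval G (take (i mod length V) V)"
      using rot_eval[OF V, of "i mod length V"] unfolding R_def by simp
    finally have "length V \<le> length (w @ drop (j - i) R)"
      using c[unfolded CJ_def, rule_format, of "w @ drop (j - i) R" "word_eval G (take (i mod length V) V)"]
        w(1) is_word_drop[OF R(1)] eval_carrier[OF is_word_take[OF V]] by simp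
    then show False using lt w(2) R(2) ij by simp
  qed
qed

end


context cay begin

lemma cont_bound: assumes g: "g \<in> carrier G" and U: "is_word X U"
  and s: "0 \<le> s" "s \<le> real (length U)" and t: "0 \<le> t" "t \<le> real (length U)"
  and e: "e \<in> set (CL (word_path G g U s) (word_path G g U t))"
  shows "\<exists>j j'. j \<le> length U \<and> j' \<le> length U \<and> \<bar>s - real j\<bar> \<le> 1 \<and> \<bar>t - real j'\<bar> \<le> 1 \<and>
     real (d (vx g U j) (vx g U j')) \<le> e"
proof -
  consider u a v b where "(u, a) \<in> set (ends G (word_path G g U s))" "(v, b) \<in> set (ends G (word_path G g U t))" "e = a + real (d u v) + b"
        | "e \<in> set (same_edge_dist (word_path G g U s) (word_path G g U t))" using e CL_set by blast
  then show ?thesis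
  proof cases
    case 1
    obtain j where j: "j \<le> length U" "u = vx g U j" "a = \<bar>s - real j\<bar>" "\<bar>s - real j\<bar> \<le> 1" using ends_path[OF g U s 1(1)] by blast
    obtain j' where j': "j' \<le> length U" "v = vx g U j'" "b = \<bar>t - real j'\<bar>" "\<bar>t - real j'\<bar> \<le> 1" using ends_path[OF g U t 1(2)] by blast
    show ?thesis using j j' 1(3) by (intro exI[of _ j] exI[of _ j']) auto
  next
    case 2
    obtain g0 x s' t' where E: "word_path G g U s = Edge g0 x s'" "word_path G g U t = Edge g0 x t'" "e = \<bar>s' - t'\<bar>"
      using same_edge_D[OF 2] by blast
    have "(g0, s') \<in> set (ends G (word_path G g U s))" "(g0, t') \<in> set (ends G (word_path G g U t))" using E by auto
    then obtain j j' where j: "j \<le> length U" "g0 = vx g U j" "\<bar>s - real j\<bar> \<le> 1"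
      and j': "j' \<le> length U" "g0 = vx g U j'" "\<bar>t - real j'\<bar> \<le> 1"
      using ends_path[OF g U s] ends_path[OF g U t] by meson
    show ?thesis using j j' E(3) vx_carrier[OF g U] by (intro exI[of _ j] exI[of _ j']) auto
  qed
qed

lemma qg_U:
  assumes hyp: "hyperbolic G X (real \<delta>)" and dp: "0 < \<delta>" and U: "is_word X U"
    and LG: "\<And>g i j. g \<in> carrier G \<Longrightarrow> i \<le> j \<Longrightarrow> j \<le> length U \<Longrightarrow> j - i \<le> 2 * (90 * \<delta>) \<Longrightarrow> d (vx g U i) (vx g U j) = j - i"
  shows "quasi_geodesic_word G X 4 (2520 * real \<delta>) U"
  unfolding quasi_geodesic_word_def
proof (intro ballI)
  fix g s t assume g: "g \<in> carrier G" and s: "s \<in> {0..real (length U)}" and t: "t \<in> {0..real (length U)}"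
  have m: "2 * \<delta> < 90 * \<delta>" using dp by simp
  have key: "44 * real j' - 44 * real j \<le> 45 * real (d (vx g U j) (vx g U j')) + 90 * real \<delta>"
    if jj: "j \<le> j'" "j' \<le> length U" for j j'
  proof -
    have D: "j' - j \<le> d (vx g U j) (vx g U j') + 2 * \<delta> * ((j' - j) div (90 * \<delta>) + 1)"
      by (rule disc[OF hyp g U m LG[OF g] jj]) auto
    have "(j' - j) div (90 * \<delta>) * (90 * \<delta>) \<le> j' - j" using div_mult_mod_eq[of "j' - j" "90 * \<delta>"] by linarith
    then have "45 * (2 * \<delta> * ((j' - j) div (90 * \<delta>))) \<le> j' - j" by (simp add: algebra_simps)
    moreover have "2 * \<delta> * ((j' - j) div (90 * \<delta>) + 1) = 2 * \<delta> * ((j' - j) div (90 * \<delta>)) + 2 * \<delta>"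
      by (simp add: algebra_simps)
    ultimately have "45 * (j' - j) \<le> 45 * d (vx g U j) (vx g U j') + (j' - j) + 90 * \<delta>" using D by linarith
    then have "44 * (j' - j) \<le> 45 * d (vx g U j) (vx g U j') + 90 * \<delta>" by linarith
    then have "real (44 * (j' - j)) \<le> real (45 * d (vx g U j) (vx g U j') + 90 * \<delta>)" by linarith
    then show ?thesis using jj by (simp add: of_nat_diff)
  qed
  have key2: "44 * \<bar>real j - real j'\<bar> \<le> 45 * real (d (vx g U j) (vx g U j')) + 90 * real \<delta>"
    if "j \<le> length U" "j' \<le> length U" for j j'
  proof (cases "j \<le> j'")
    case True then show ?thesis using key[of j j'] that by simp
  next
    case False
    have "d (vx g U j) (vx g U j') = d (vx g U j') (vx g U j)" using d_sym' vx_carrier[OF g U] by blast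
    then show ?thesis using key[of j' j] that False by simp
  qed
  obtain e where e: "e \<in> set (CL (word_path G g U s) (word_path G g U t))"
    "cdist G X (word_path G g U s) (word_path G g U t) = e" using cdist_ex by blast
  have e0: "0 \<le> e" using e(2) cdist_nonneg path_valid[OF g U] s t by auto
  obtain j j' where jj: "j \<le> length U" "j' \<le> length U" "\<bar>s - real j\<bar> \<le> 1" "\<bar>t - real j'\<bar> \<le> 1"
     "real (d (vx g U j) (vx g U j')) \<le> e"
    using cont_bound[OF g U _ _ _ _ e(1)] s t by auto
  have "44 * \<bar>real j - real j'\<bar> \<le> 45 * e + 90 * real \<delta>" using key2[OF jj(1,2)] jj(5) by linarith
  moreover have "\<bar>s - t\<bar> \<le> \<bar>real j - real j'\<bar> + 2" using jj(3,4) by (simp add: abs_if split: if_splits)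
  moreover have "1 \<le> real \<delta>" using dp by simp
  ultimately have "\<bar>s - t\<bar> \<le> 4 * e + 2520 * real \<delta>"
    using e0 by (rule arith_final)
  then show "\<bar>s - t\<bar> \<le> 4 * cdist G X (word_path G g U s) (word_path G g U t) + 2520 * real \<delta>"
    using e(2) by simp
qed

end

theorem lemma3p7:
  fixes G :: "('g, 'b) monoid_scheme" and X :: "'g set" and \<delta> :: nat
    and V :: "('g \<times> bool) list" and k :: int
  assumes "group G" and "finite X" and "X \<subseteq> carrier G" and "generate G X = carrier G"
    and "\<delta> > 0" and "hyperbolic G X (real \<delta>)"
    and "cyclically_minimal G X V" and "length V \<ge> 180 * \<delta>"
  shows "quasi_geodesic_word G X 4 (2520 * real \<delta>) (word_pow V k)"
proof -
  interpret cay G X using assms(1,3,4) by (simp add: cay_def cay_axioms_def)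
  have V: "is_word X V" and cV: "CJ V" using assms(7) by (auto simp: cyclically_minimal_def CJ_def)
  have gen: "quasi_geodesic_word G X 4 (2520 * real \<delta>) (concat (replicate K V'))"
    if V': "is_word X V'" "CJ V'" "length V' = length V" for V' K
  proof (rule qg_U[OF assms(6,5)])
    show "is_word X (concat (replicate K V'))" using V' by (auto simp: is_word_def)
    fix g i j assume a: "g \<in> carrier G" "i \<le> j" "j \<le> length (concat (replicate K V'))" "j - i \<le> 2 * (90 * \<delta>)"
    have "0 < length V" using assms(5,8) by linarith
    then have p: "0 < length V'" using V' by simp
    have "j - i \<le> length V'" using a(4) V'(3) assms(8) by linarith
    then show "d (vx g (concat (replicate K V')) i) (vx g (concat (replicate K V')) j) = j - i"
      using LG_pow[OF V'(1,2) p a(1,2,3)] by simp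
  qed
  show ?thesis
  proof (cases "0 \<le> k")
    case True then show ?thesis using gen[OF V cV refl] by (simp add: word_pow_def)
  next
    case False then show ?thesis using gen[OF is_word_inv[OF V] CJ_inv[OF V cV]] by (simp add: word_pow_def)
  qed
qed



end
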